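(* Let $n\ge3$ and $\ell\ge1$, and let $c$ be an SR state on $K_n^{(\ell)}$. Let $k_1,k_2,k_3\in\{1,\dots,n\}$ be distinct, and suppose there is an orientation $\mathcal{O}$ of the complete graph $K_n$ on $\{1,\dots,n\}$ with $c_i\ge\mathrm{in}^{\mathcal{O}}_i$ for all $i\in\{1,\dots,n\}$ such that $k_1\to k_2$, $k_2\to k_3$ and $k_1\to k_3$ in $\mathcal{O}$. Then there exists a finite sequence of grain additions and topplings on $K_n^{(\ell)}$ leading from $c^{\max}$ to $c$ in which every toppling of $k_1$, $k_2$ or $k_3$ is deterministic, and in which the last topplings of these three vertices occur in the order $k_3$, then $k_2$, then $k_1$ ($k_3$ possibly never toppling).
   Context: For $n\ge3,\ell\ge1$, $K_n^{(\ell)}$ is the multigraph on vertex set $\{0,1,\dots,n\}$ with one edge between each pair of distinct vertices of $\{1,\dots,n\}$ and $\ell$ parallel edges between each $k\in\{1,\dots,n\}$ and the sink $0$; so every non-sink vertex has degree $n-1+\ell$. A configuration is $c\in\mathbb{Z}_{\ge0}^n$, stable if $c_i<n-1+\ell$ for all $i$; $c^{\max}=(n-2+\ell,\dots,n-2+\ell)$. A toppling of a vertex $i$ with $c_i\ge n-1+\ell$ moves one grain from $i$ along each edge of some sub-multiset of the edges incident to $i$ to the other endpoint (grains reaching the sink disappear); it is deterministic if that sub-multiset consists of all incident edges. A sequence of grain additions and topplings is a finite sequence of operations, each either adding one grain at a vertex of $\{1,\dots,n\}$ or toppling a currently unstable vertex. In the SSM with parameter $p\in(0,1)$, an unstable vertex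 topples by sending, independently for each incident edge, one grain along it with probability $p$; the SSM Markov chain on stable configurations adds a grain at vertex $i$ with probability $\mu_i>0$ and stabilises, and SR states are its recurrent states (equivalently, stable configurations reachable from $c^{\max}$ by a sequence of grain additions and topplings). $\mathrm{in}^{\mathcal{O}}_i$ denotes the in-degree of $i$ in $\mathcal{O}$, and $x\to y$ means the edge $\{x,y\}$ is directed from $x$ to $y$. *)

theory Defs
  imports Main
begin

text \<open>Sandpile model on K_n^(l): non-sink vertices 1..n, sink 0.
  Configurations are functions nat => nat, meaningful on {1..n}.\<close>

datatype sp_op =
    Add nat
  | Topple nat "nat set" nat
    \<comment> \<open>Topple i S s: vertex i sends one grain to each j in S (S a subset of the
        non-sink neighbours of i) and one grain along each of s of the l sink edges\<close>

definition config :: "nat \<Rightarrow> (nat \<Rightarrow> nat) \<Rightarrow> bool" where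
  "config n c \<longleftrightarrow> (\<forall>i. i \<notin> {1..n} \<longrightarrow> c i = 0)"

definition stable :: "nat \<Rightarrow> nat \<Rightarrow> (nat \<Rightarrow> nat) \<Rightarrow> bool" where
  "stable n l c \<longleftrightarrow> (\<forall>i\<in>{1..n}. c i < n - 1 + l)"

definition cmax :: "nat \<Rightarrow> nat \<Rightarrow> (nat \<Rightarrow> nat)" where
  "cmax n l = (\<lambda>i. if i \<in> {1..n} then n - 2 + l else 0)"

definition valid_op :: "nat \<Rightarrow> nat \<Rightarrow> (nat \<Rightarrow> nat) \<Rightarrow> sp_op \<Rightarrow> bool" where
  "valid_op n l c op = (case op of
      Add i \<Rightarrow> i \<in> {1..n}
    | Topple i S s \<Rightarrow> i \<in> {1..n} \<and> c i \<ge> n - 1 + l \<and> S \<subseteq> {1..n} - {i} \<and> s \<le> l)"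

definition apply_op :: "(nat \<Rightarrow> nat) \<Rightarrow> sp_op \<Rightarrow> (nat \<Rightarrow> nat)" where
  "apply_op c op = (case op of
      Add i \<Rightarrow> c(i := c i + 1)
    | Topple i S s \<Rightarrow> (\<lambda>j. if j = i then c i - (card S + s)
                             else if j \<in> S then c j + 1 else c j))"

fun run :: "nat \<Rightarrow> nat \<Rightarrow> (nat \<Rightarrow> nat) \<Rightarrow> sp_op list \<Rightarrow> (nat \<Rightarrow> nat) option" where
  "run n l c [] = Some c"
| "run n l c (op # ops) = (if valid_op n l c op then run n l (apply_op c op) ops else None)"

definition deterministic_op :: "nat \<Rightarrow> nat \<Rightarrow> sp_op \<Rightarrow> bool" where
  "deterministic_op n l op = (case op of
      Add i \<Rightarrow> True
    | Topple i S s \<Rightarrow> S = {1..n} - {i} \<and> s = l)"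

definition topples_at :: "sp_op list \<Rightarrow> nat \<Rightarrow> nat \<Rightarrow> bool" where
  "topples_at ops j k \<longleftrightarrow> j < length ops \<and> (\<exists>S s. ops ! j = Topple k S s)"

text \<open>SR states: stable configurations reachable from cmax by grain additions and
  topplings (the equivalent characterisation of recurrent states of the SSM chain).\<close>
definition SR :: "nat \<Rightarrow> nat \<Rightarrow> (nat \<Rightarrow> nat) \<Rightarrow> bool" where
  "SR n l c \<longleftrightarrow> config n c \<and> stable n l c \<and> (\<exists>ops. run n l (cmax n l) ops = Some c)"

text \<open>Orientation of the complete graph on {1..n}: Ori i j means i -> j.\<close>
definition orientation :: "nat \<Rightarrow> (nat \<Rightarrow> nat \<Rightarrow> bool) \<Rightarrow> bool" where
  "orientation n Ori \<longleftrightarrow>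
     (\<forall>i j. Ori i j \<longrightarrow> i \<in> {1..n} \<and> j \<in> {1..n} \<and> i \<noteq> j) \<and>
     (\<forall>i\<in>{1..n}. \<forall>j\<in>{1..n}. i \<noteq> j \<longrightarrow> (Ori i j \<or> Ori j i) \<and> \<not> (Ori i j \<and> Ori j i))"

definition indeg :: "nat \<Rightarrow> (nat \<Rightarrow> nat \<Rightarrow> bool) \<Rightarrow> nat \<Rightarrow> nat" where
  "indeg n Ori i = card {j \<in> {1..n}. Ori j i}"

end

theory Submission imports Defs begin

lemma run_append: "run n l c (xs @ ys) = (case run n l c xs of None \<Rightarrow> None | Some d \<Rightarrow> run n l d ys)"
  by (induction xs arbitrary: c) auto

lemma run_adds: "x \<in> {1..n} \<Longrightarrow> run n l c (replicate k (Add x) @ ys) = run n l (c(x := c x + k)) ys"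
proof (induction k arbitrary: c)
  case 0 then show ?case by simp
next
  case (Suc k)
  have "run n l c (replicate (Suc k) (Add x) @ ys) = run n l (c(x := c x + 1)) (replicate k (Add x) @ ys)"
    using Suc.prems by (simp add: valid_op_def apply_op_def)
  also have "\<dots> = run n l ((c(x := c x + 1))(x := (c(x := c x + 1)) x + k)) ys"
    by (rule Suc.IH[OF Suc.prems])
  also have "(c(x := c x + 1))(x := (c(x := c x + 1)) x + k) = c(x := c x + Suc k)" by simp
  finally show ?case .
qed

fun rnd :: "nat \<Rightarrow> nat \<Rightarrow> (nat \<Rightarrow> nat \<Rightarrow> bool) \<Rightarrow> nat set \<Rightarrow> (nat \<Rightarrow> nat) \<Rightarrow> nat list \<Rightarrow> sp_op list" where
  "rnd n l R E c [] = []"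
| "rnd n l R E c (x#xs) = replicate (n - 1 + l - c x) (Add x) @ Topple x (set xs \<union> {w\<in>E. R x w}) l #
     rnd n l R (insert x E) (apply_op (c(x := max (c x) (n-1+l))) (Topple x (set xs \<union> {w\<in>E. R x w}) l)) xs"

fun rst :: "nat \<Rightarrow> nat \<Rightarrow> (nat \<Rightarrow> nat \<Rightarrow> bool) \<Rightarrow> nat set \<Rightarrow> (nat \<Rightarrow> nat) \<Rightarrow> nat list \<Rightarrow> (nat \<Rightarrow> nat)" where
  "rst n l R E c [] = c"
| "rst n l R E c (x#xs) =
     rst n l R (insert x E) (apply_op (c(x := max (c x) (n-1+l))) (Topple x (set xs \<union> {w\<in>E. R x w}) l)) xs"

lemma run_rnd: "distinct xs \<Longrightarrow> set xs \<subseteq> {1..n} \<Longrightarrow> E \<subseteq> {1..n} \<Longrightarrow> E \<inter> set xs = {} \<Longrightarrow>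
  run n l c (rnd n l R E c xs @ ys) = run n l (rst n l R E c xs) ys"
proof (induction xs arbitrary: E c)
  case Nil then show ?case by simp
next
  case (Cons x xs)
  let ?S = "set xs \<union> {w\<in>E. R x w}"
  let ?c1 = "c(x := max (c x) (n-1+l))"
  have x: "x \<in> {1..n}" using Cons.prems by auto
  have e: "c(x := c x + (n - 1 + l - c x)) = ?c1" by (auto simp: max_def)
  have v: "valid_op n l ?c1 (Topple x ?S l)"
    using Cons.prems by (auto simp: valid_op_def)
  have "run n l c (rnd n l R E c (x#xs) @ ys) =
     run n l ?c1 (Topple x ?S l # (rnd n l R (insert x E) (apply_op ?c1 (Topple x ?S l)) xs @ ys))"
    using run_adds[OF x, of l c "n - 1 + l - c x"] e by simp
  also have "\<dots> = run n l (apply_op ?c1 (Topple x ?S l)) (rnd n l R (insert x E) (apply_op ?c1 (Topple x ?S l)) xs @ ys)"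
    using v by simp
  also have "\<dots> = run n l (rst n l R (insert x E) (apply_op ?c1 (Topple x ?S l)) xs) ys"
    using Cons by (intro Cons.IH) auto
  finally show ?case by simp
qed

lemma rst_out: "distinct xs \<Longrightarrow> set xs \<subseteq> {1..n} \<Longrightarrow> E \<subseteq> {1..n} \<Longrightarrow> E \<inter> set xs = {} \<Longrightarrow> z \<notin> set xs \<Longrightarrow>
  rst n l R E c xs z = (if z \<in> E then c z + card {y \<in> set xs. R y z} else c z)"
proof (induction xs arbitrary: E c)
  case Nil then show ?case by simp
next
  case (Cons x xs)
  let ?S = "set xs \<union> {w\<in>E. R x w}"
  let ?c2 = "apply_op (c(x := max (c x) (n-1+l))) (Topple x ?S l)"
  have IH: "rst n l R (insert x E) ?c2 xs z = (if z \<in> insert x E then ?c2 z + card {y \<in> set xs. R y z} else ?c2 z)"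
    using Cons by (intro Cons.IH) auto
  have zx: "z \<noteq> x" using Cons.prems by auto
  have fin: "finite {y \<in> set xs. R y z}" by simp
  show ?case
  proof (cases "z \<in> E")
    case True
    have c2: "?c2 z = c z + (if R x z then 1 else 0)" using zx True Cons.prems
      by (auto simp: apply_op_def)
    have "{y \<in> set (x#xs). R y z} = (if R x z then insert x {y \<in> set xs. R y z} else {y \<in> set xs. R y z})"
      by auto
    moreover have nx: "x \<notin> set xs" using Cons.prems by auto
    ultimately have "card {y \<in> set (x#xs). R y z} = card {y \<in> set xs. R y z} + (if R x z then 1 else 0)"
      using fin nx by (simp add: card_insert_if)
    then show ?thesis using IH c2 True by simp
  next
    case False
    have c2: "?c2 z = c z" using zx False Cons.prems by (auto simp: apply_op_def)
    then show ?thesis using IH False zx by simp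
  qed
qed

lemma rst_in: "distinct xs \<Longrightarrow> set xs \<subseteq> {1..n} \<Longrightarrow> E \<subseteq> {1..n} \<Longrightarrow> E \<inter> set xs = {} \<Longrightarrow> i < length xs \<Longrightarrow>
  rst n l R E c xs (xs!i) = max (c (xs!i) + i) (n-1+l) - (length xs - Suc i)
     - card {w \<in> E \<union> set (take i xs). R (xs!i) w} - l + card {y \<in> set (drop (Suc i) xs). R y (xs!i)}"
proof (induction xs arbitrary: E c i)
  case Nil then show ?case by simp
next
  case (Cons x xs)
  let ?S = "set xs \<union> {w\<in>E. R x w}"
  let ?c2 = "apply_op (c(x := max (c x) (n-1+l))) (Topple x ?S l)"
  show ?case
  proof (cases i)
    case 0
    have o: "rst n l R (insert x E) ?c2 xs x = ?c2 x + card {y \<in> set xs. R y x}"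
      using Cons.prems by (subst rst_out) auto
    have finE: "finite E" using Cons.prems(3) finite_subset by blast
    have "card ?S = card (set xs) + card {w\<in>E. R x w}"
      by (rule card_Un_disjoint) (use Cons.prems finE in auto)
    also have "card (set xs) = length xs" using Cons.prems by (simp add: distinct_card)
    finally have cs: "card ?S = length xs + card {w\<in>E. R x w}" .
    have "?c2 x = max (c x) (n-1+l) - (card ?S + l)" by (simp add: apply_op_def)
    then show ?thesis using o cs 0 by simp
  next
    case (Suc j)
    have j: "j < length xs" using Cons.prems Suc by simp
    let ?z = "xs ! j"
    have zin: "?z \<in> set xs" using j by simp
    have zx: "?z \<noteq> x" using Cons.prems zin by auto
    have c2: "?c2 ?z = c ?z + 1" using zin zx by (simp add: apply_op_def)
    have IH: "rst n l R (insert x E) ?c2 xs ?z = max (?c2 ?z + j) (n-1+l) - (length xs - Suc j)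
     - card {w \<in> insert x E \<union> set (take j xs). R ?z w} - l + card {y \<in> set (drop (Suc j) xs). R y ?z}"
      using Cons.prems j by (intro Cons.IH) auto
    show ?thesis using IH c2 Suc by simp
  qed
qed

lemma rnd_topples: "op \<in> set (rnd n l R E c xs) \<Longrightarrow> (\<exists>x. op = Add x) \<or>
   (\<exists>ys x zs. xs = ys @ x # zs \<and> op = Topple x (set zs \<union> {w \<in> E \<union> set ys. R x w}) l)"
proof (induction xs arbitrary: E c)
  case Nil then show ?case by simp
next
  case (Cons x xs)
  let ?S = "set xs \<union> {w\<in>E. R x w}"
  let ?c2 = "apply_op (c(x := max (c x) (n-1+l))) (Topple x ?S l)"
  from Cons.prems consider "op \<in> set (replicate (n - 1 + l - c x) (Add x))" | "op = Topple x ?S l"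
    | "op \<in> set (rnd n l R (insert x E) ?c2 xs)" by auto
  then show ?case
  proof cases
    case 1 then show ?thesis by (auto split: if_splits)
  next
    case 2 then show ?thesis by (intro disjI2 exI[of _ "[]"]) auto
  next
    case 3
    from Cons.IH[OF 3] show ?thesis
    proof
      assume "\<exists>ys y zs. xs = ys @ y # zs \<and> op = Topple y (set zs \<union> {w \<in> insert x E \<union> set ys. R y w}) l"
      then obtain ys y zs where "xs = ys @ y # zs" "op = Topple y (set zs \<union> {w \<in> insert x E \<union> set ys. R y w}) l"
        by blast
      then show ?thesis by (intro disjI2 exI[of _ "x#ys"] exI[of _ y] exI[of _ zs]) auto
    qed simp
  qed
qed

lemma card_take_set: "distinct xs \<Longrightarrow> i \<le> length xs \<Longrightarrow> card (set (take i xs)) = i"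
  by (simp add: distinct_card)

lemma card_drop_set: "distinct xs \<Longrightarrow> card (set (drop i xs)) = length xs - i"
  by (simp add: distinct_card)

lemma det_round:
  assumes d: "distinct p" and sp: "set p = {1..n}" and lp: "length p = n"
    and b: "\<forall>i<n. c (p!i) \<le> n - 1 - i + B + l"
  shows "\<forall>i<n. rst n l (\<lambda>_ _. True) {} c p (p!i) \<le> n - 1 - i + B"
proof (intro allI impI)
  fix i assume i: "i < n"
  have "rst n l (\<lambda>_ _. True) {} c p (p!i) = max (c (p!i) + i) (n-1+l) - (length p - Suc i)
     - card {w \<in> {} \<union> set (take i p). True} - l + card {y \<in> set (drop (Suc i) p). True}"
    using d sp lp i by (intro rst_in) auto
  also have "\<dots> = max (c (p!i) + i) (n-1+l) - (n - Suc i) - i - l + (n - Suc i)"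
    using card_take_set[OF d, of i] card_drop_set[OF d, of "Suc i"] i lp by simp
  also have "\<dots> \<le> n - 1 - i + B" using b i by (auto simp: max_def)
  finally show "rst n l (\<lambda>_ _. True) {} c p (p!i) \<le> n - 1 - i + B" .
qed

fun drs :: "nat \<Rightarrow> nat \<Rightarrow> nat list \<Rightarrow> nat \<Rightarrow> (nat \<Rightarrow> nat) \<Rightarrow> sp_op list" where
  "drs n l p 0 c = []"
| "drs n l p (Suc t) c = rnd n l (\<lambda>_ _. True) {} c p @ drs n l p t (rst n l (\<lambda>_ _. True) {} c p)"

fun dst :: "nat \<Rightarrow> nat \<Rightarrow> nat list \<Rightarrow> nat \<Rightarrow> (nat \<Rightarrow> nat) \<Rightarrow> (nat \<Rightarrow> nat)" where
  "dst n l p 0 c = c"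
| "dst n l p (Suc t) c = dst n l p t (rst n l (\<lambda>_ _. True) {} c p)"

lemma run_drs: "distinct p \<Longrightarrow> set p = {1..n} \<Longrightarrow> run n l c (drs n l p t c @ ys) = run n l (dst n l p t c) ys"
proof (induction t arbitrary: c)
  case 0 then show ?case by simp
next
  case (Suc t)
  have "run n l c (drs n l p (Suc t) c @ ys) = run n l c (rnd n l (\<lambda>_ _. True) {} c p @ (drs n l p t (rst n l (\<lambda>_ _. True) {} c p) @ ys))"
    by simp
  also have "\<dots> = run n l (rst n l (\<lambda>_ _. True) {} c p) (drs n l p t (rst n l (\<lambda>_ _. True) {} c p) @ ys)"
    using Suc.prems by (intro run_rnd) auto
  finally show ?case using Suc by simp
qed

lemma dst_bound: "distinct p \<Longrightarrow> set p = {1..n} \<Longrightarrow> length p = n \<Longrightarrow>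
   \<forall>i<n. c (p!i) \<le> n - 1 - i + l * t \<Longrightarrow> \<forall>i<n. dst n l p t c (p!i) \<le> n - 1 - i"
proof (induction t arbitrary: c)
  case 0 then show ?case by simp
next
  case (Suc t)
  have "\<forall>i<n. rst n l (\<lambda>_ _. True) {} c p (p!i) \<le> n - 1 - i + l * t"
    using Suc.prems by (intro det_round) (auto simp: algebra_simps)
  then show ?case using Suc by simp
qed

lemma dst_out: "distinct p \<Longrightarrow> set p = {1..n} \<Longrightarrow> z \<notin> {1..n} \<Longrightarrow> dst n l p t c z = c z"
proof (induction t arbitrary: c)
  case 0 then show ?case by simp
next
  case (Suc t)
  then show ?case by (simp add: rst_out)
qed

lemma drs_topples: "distinct p \<Longrightarrow> set p = {1..n} \<Longrightarrow> op \<in> set (drs n l p t c) \<Longrightarrow>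
   (\<exists>x. op = Add x) \<or> (\<exists>x. op = Topple x ({1..n} - {x}) l)"
proof (induction t arbitrary: c)
  case 0 then show ?case by simp
next
  case (Suc t)
  show ?case
  proof (cases "op \<in> set (rnd n l (\<lambda>_ _. True) {} c p)")
    case True
    from rnd_topples[OF True] show ?thesis
    proof
      assume "\<exists>ys x zs. p = ys @ x # zs \<and> op = Topple x (set zs \<union> {w \<in> {} \<union> set ys. True}) l"
      then obtain ys x zs where e: "p = ys @ x # zs" "op = Topple x (set zs \<union> {w \<in> {} \<union> set ys. True}) l"
        by blast
      have "set zs \<union> {w \<in> {} \<union> set ys. True} = {1..n} - {x}"
        using Suc.prems(1,2) e(1) by auto
      then show ?thesis using e by auto
    qed simp
  next
    case False
    then show ?thesis using Suc by auto
  qed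
qed

lemma final_val:
  assumes d: "distinct p" and sp: "set p = {1..n}" and lp: "length p = n"
    and O: "orientation n Ori" and b: "\<forall>i<n. q (p!i) \<le> n - 1 - i" and z: "z \<in> {1..n}"
  shows "rst n l Ori {} q p z = indeg n Ori z"
proof -
  obtain i where i: "i < n" "z = p!i" using z sp lp by (metis in_set_conv_nth)
  let ?T = "set (take i p)" and ?D = "set (drop (Suc i) p)"
  have decomp: "p = take i p @ z # drop (Suc i) p" using i lp by (simp add: id_take_nth_drop)
  have dd: "distinct (take i p @ z # drop (Suc i) p)" using d decomp by simp
  have zT: "z \<notin> ?T" and zD: "z \<notin> ?D" and TD: "?T \<inter> ?D = {}" using dd by auto
  have Tsub: "?T \<subseteq> {1..n}" using sp by (metis set_take_subset)
  have Dsub: "?D \<subseteq> {1..n}" using sp by (metis set_drop_subset)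
  have "set (take i p @ z # drop (Suc i) p) = insert z (?T \<union> ?D)" by auto
  then have all: "{1..n} = insert z (?T \<union> ?D)" using sp decomp by simp
  have cT: "card ?T = i" using card_take_set[OF d, of i] i lp by simp
  have r: "rst n l Ori {} q p z = max (q z + i) (n-1+l) - (n - Suc i)
     - card {w \<in> {} \<union> ?T. Ori z w} - l + card {y \<in> ?D. Ori y z}"
    using rst_in[OF d, of n "{}" i l Ori q] sp lp i by auto
  let ?a = "card {w \<in> ?T. Ori z w}" and ?b = "card {w \<in> ?T. Ori w z}" and ?d = "card {y \<in> ?D. Ori y z}"
  have O1: "\<forall>i\<in>{1..n}. \<forall>j\<in>{1..n}. i \<noteq> j \<longrightarrow> (Ori i j \<or> Ori j i) \<and> \<not> (Ori i j \<and> Ori j i)"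
    and O2: "\<forall>i j. Ori i j \<longrightarrow> i \<in> {1..n} \<and> j \<in> {1..n} \<and> i \<noteq> j"
    using O unfolding orientation_def by blast+
  have "?a + ?b = card ({w \<in> ?T. Ori z w} \<union> {w \<in> ?T. Ori w z})"
  proof (rule card_Un_disjoint[symmetric])
    show "{w \<in> ?T. Ori z w} \<inter> {w \<in> ?T. Ori w z} = {}"
    proof (rule ccontr)
      assume "{w \<in> ?T. Ori z w} \<inter> {w \<in> ?T. Ori w z} \<noteq> {}"
      then obtain w where "w \<in> ?T" "Ori z w" "Ori w z" by blast
      then show False using O1 Tsub z zT by (metis subsetD)
    qed
  qed auto
  also have "{w \<in> ?T. Ori z w} \<union> {w \<in> ?T. Ori w z} = ?T"
  proof
    show "?T \<subseteq> {w \<in> ?T. Ori z w} \<union> {w \<in> ?T. Ori w z}"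
    proof
      fix w assume w: "w \<in> ?T"
      then have "w \<in> {1..n}" "w \<noteq> z" using Tsub zT by auto
      then have "Ori z w \<or> Ori w z" using O1 z by blast
      then show "w \<in> {w \<in> ?T. Ori z w} \<union> {w \<in> ?T. Ori w z}" using w by blast
    qed
  qed blast
  finally have ab: "?a + ?b = i" using cT by simp
  have "indeg n Ori z = card ({w \<in> ?T. Ori w z} \<union> {y \<in> ?D. Ori y z})"
  proof -
    have "{j \<in> insert z (?T \<union> ?D). Ori j z} = {w \<in> ?T. Ori w z} \<union> {y \<in> ?D. Ori y z}"
      using O2 by auto
    then show ?thesis unfolding indeg_def all by simp
  qed
  also have "\<dots> = ?b + ?d" by (rule card_Un_disjoint) (use TD in auto)
  finally have ind: "indeg n Ori z = ?b + ?d" .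
  have mx: "max (q z + i) (n-1+l) = n - 1 + l" using b i by auto
  show ?thesis using r mx ab ind i by simp
qed

lemma run_addall: "distinct xs \<Longrightarrow> set xs \<subseteq> {1..n} \<Longrightarrow>
  run n l q (concat (map (\<lambda>x. replicate (g x) (Add x)) xs)) = Some (\<lambda>z. if z \<in> set xs then q z + g z else q z)"
proof (induction xs arbitrary: q)
  case Nil then show ?case by simp
next
  case (Cons x xs)
  have "run n l q (concat (map (\<lambda>x. replicate (g x) (Add x)) (x#xs))) =
    run n l (q(x := q x + g x)) (concat (map (\<lambda>x. replicate (g x) (Add x)) xs))"
    using Cons.prems by (simp add: run_adds)
  also have "\<dots> = Some (\<lambda>z. if z \<in> set xs then (q(x := q x + g x)) z + g z else (q(x := q x + g x)) z)"
    using Cons by (intro Cons.IH) auto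
  also have "(\<lambda>z. if z \<in> set xs then (q(x := q x + g x)) z + g z else (q(x := q x + g x)) z)
      = (\<lambda>z. if z \<in> set (x#xs) then q z + g z else q z)"
    using Cons.prems by (auto simp: fun_eq_iff)
  finally show ?case .
qed

lemma no_later: "ops = A @ x # B \<Longrightarrow> \<forall>op\<in>set B. \<forall>S s. op \<noteq> Topple k S s \<Longrightarrow> length A < j \<Longrightarrow> \<not> topples_at ops j k"
proof
  assume e: "ops = A @ x # B" and nb: "\<forall>op\<in>set B. \<forall>S s. op \<noteq> Topple k S s" and j: "length A < j"
    and t: "topples_at ops j k"
  then obtain S s where jl: "j < length ops" and o: "ops ! j = Topple k S s" unfolding topples_at_def by blast
  have "ops ! j = B ! (j - length A - 1)" using e j by (simp add: nth_append)
  moreover have "j - length A - 1 < length B" using e j jl by simp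
  ultimately have "Topple k S s \<in> set B" using o by (metis nth_mem)
  then show False using nb by blast
qed

lemma at_pos: "ops = A @ Topple k S s # B \<Longrightarrow> topples_at ops (length A) k"
  unfolding topples_at_def by auto

theorem lemma5p5:
  fixes n l :: nat and c :: "nat \<Rightarrow> nat" and k1 k2 k3 :: nat
    and Ori :: "nat \<Rightarrow> nat \<Rightarrow> bool"
  assumes "n \<ge> 3" and "l \<ge> 1"
    and "SR n l c"
    and "k1 \<in> {1..n}" and "k2 \<in> {1..n}" and "k3 \<in> {1..n}"
    and "k1 \<noteq> k2" and "k2 \<noteq> k3" and "k1 \<noteq> k3"
    and "orientation n Ori"
    and "\<forall>i\<in>{1..n}. c i \<ge> indeg n Ori i"
    and "Ori k1 k2" and "Ori k2 k3" and "Ori k1 k3"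
  shows "\<exists>ops. run n l (cmax n l) ops = Some c
           \<and> (\<forall>op\<in>set ops. \<forall>i S s. op = Topple i S s \<and> i \<in> {k1, k2, k3}
                  \<longrightarrow> deterministic_op n l op)
           \<and> (\<exists>j1 j2. j2 < j1
                 \<and> topples_at ops j1 k1 \<and> (\<forall>j. j1 < j \<longrightarrow> \<not> topples_at ops j k1)
                 \<and> topples_at ops j2 k2 \<and> (\<forall>j. j2 < j \<longrightarrow> \<not> topples_at ops j k2)
                 \<and> (\<forall>j. topples_at ops j k3 \<longrightarrow> j < j2))"
proof -
  note A = assms
  define rest where "rest = sorted_list_of_set ({1..n} - {k1,k2,k3})"
  define p where "p = k3 # k2 # k1 # rest"
  have srest: "set rest = {1..n} - {k1,k2,k3}" and drest: "distinct rest" unfolding rest_def by auto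
  have dp: "distinct p" unfolding p_def using srest drest A by auto
  have sp: "set p = {1..n}" unfolding p_def using srest A by auto
  have lp: "length p = n" using dp sp distinct_card[OF dp] by simp
  define q0 where "q0 = dst n l p n (cmax n l)"
  have b0: "\<forall>i<n. cmax n l (p!i) \<le> n - 1 - i + l * n"
  proof (intro allI impI)
    fix i assume i: "i < n"
    have "p!i \<in> {1..n}" using sp lp i nth_mem by metis
    then have "cmax n l (p!i) = n - 2 + l" by (simp add: cmax_def)
    moreover have "l * n = l + l * (n - 1)" using A(1) by (cases n) auto
    moreover have "l * (n - 1) \<ge> n - 1" using A(2) by simp
    ultimately show "cmax n l (p!i) \<le> n - 1 - i + l * n" using i A(1) by linarith
  qed
  have bq0: "\<forall>i<n. q0 (p!i) \<le> n - 1 - i" unfolding q0_def using dst_bound[OF dp sp lp b0] .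
  define q1 where "q1 = rst n l Ori {} q0 p"
  have q1in: "\<And>z. z \<in> {1..n} \<Longrightarrow> q1 z = indeg n Ori z"
    unfolding q1_def using final_val[OF dp sp lp A(10) bq0] by blast
  have q1out: "\<And>z. z \<notin> {1..n} \<Longrightarrow> q1 z = 0"
  proof -
    fix z :: nat assume z: "z \<notin> {1..n}"
    have "q1 z = q0 z" unfolding q1_def using dp sp z by (subst rst_out) auto
    also have "\<dots> = cmax n l z" unfolding q0_def using dst_out[OF dp sp z] .
    finally show "q1 z = 0" using z by (auto simp: cmax_def)
  qed
  have cfg: "config n c" using A(3) unfolding SR_def by blast
  define adds where "adds = concat (map (\<lambda>x. replicate (c x - q1 x) (Add x)) [1..<n+1])"
  have radds: "run n l q1 adds = Some c"
  proof -
    have "run n l q1 adds = Some (\<lambda>z. if z \<in> set [1..<n+1] then q1 z + (c z - q1 z) else q1 z)"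
      unfolding adds_def by (rule run_addall) auto
    also have "(\<lambda>z. if z \<in> set [1..<n+1] then q1 z + (c z - q1 z) else q1 z) = c"
    proof
      fix z
      show "(if z \<in> set [1..<n+1] then q1 z + (c z - q1 z) else q1 z) = c z"
      proof (cases "z \<in> {1..n}")
        case True
        then have "q1 z \<le> c z" using q1in A(11) by simp
        then show ?thesis using True by auto
      next
        case False
        then show ?thesis using q1out cfg unfolding config_def by auto
      qed
    qed
    finally show ?thesis .
  qed
  define N0 where "N0 = drs n l p n (cmax n l)"
  define ops where "ops = N0 @ rnd n l Ori {} q0 p @ adds"
  have run: "run n l (cmax n l) ops = Some c"
  proof -
    have "run n l (cmax n l) ops = run n l q0 (rnd n l Ori {} q0 p @ adds)"
      unfolding ops_def N0_def q0_def by (rule run_drs[OF dp sp])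
    also have "\<dots> = run n l q1 adds" unfolding q1_def using dp sp by (intro run_rnd) auto
    finally show ?thesis using radds by simp
  qed
  let ?S3 = "set (k2#k1#rest) \<union> {w\<in>{}. Ori k3 w}"
  let ?S2 = "set (k1#rest) \<union> {w\<in>insert k3 {}. Ori k2 w}"
  let ?S1 = "set rest \<union> {w\<in>insert k2 (insert k3 {}). Ori k1 w}"
  let ?E = "insert k1 (insert k2 (insert k3 {}))"
  obtain a3 a2 a1 q' where rr: "rnd n l Ori {} q0 p = replicate a3 (Add k3) @ Topple k3 ?S3 l #
     replicate a2 (Add k2) @ Topple k2 ?S2 l # replicate a1 (Add k1) @ Topple k1 ?S1 l # rnd n l Ori ?E q' rest"
    unfolding p_def rnd.simps by blast
  have S3: "?S3 = {1..n} - {k3}" using sp dp unfolding p_def by auto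
  have S2: "?S2 = {1..n} - {k2}" using sp dp A(13) unfolding p_def by auto
  have S1: "?S1 = {1..n} - {k1}" using sp dp A(12,14) unfolding p_def by auto
  define R where "R = rnd n l Ori ?E q' rest"
  have Rt: "\<And>op. op \<in> set R \<Longrightarrow> (\<exists>x. op = Add x) \<or> (\<exists>x S s. op = Topple x S s \<and> x \<in> set rest)"
  proof -
    fix op assume "op \<in> set R"
    from rnd_topples[OF this[unfolded R_def]] show "(\<exists>x. op = Add x) \<or> (\<exists>x S s. op = Topple x S s \<and> x \<in> set rest)"
      by fastforce
  qed
  have At: "\<And>op. op \<in> set adds \<Longrightarrow> \<exists>x. op = Add x" unfolding adds_def by auto
  have kr: "k1 \<notin> set rest" "k2 \<notin> set rest" "k3 \<notin> set rest" using srest by auto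
  have ops_eq: "ops = N0 @ replicate a3 (Add k3) @ Topple k3 ?S3 l #
     replicate a2 (Add k2) @ Topple k2 ?S2 l # replicate a1 (Add k1) @ Topple k1 ?S1 l # R @ adds"
    unfolding ops_def rr R_def by simp
  have det: "\<forall>op\<in>set ops. \<forall>i S s. op = Topple i S s \<and> i \<in> {k1, k2, k3} \<longrightarrow> deterministic_op n l op"
  proof (intro ballI allI impI)
    fix op i S s assume op: "op \<in> set ops" and h: "op = Topple i S s \<and> i \<in> {k1, k2, k3}"
    from op consider "op \<in> set N0" | "op \<in> set (replicate a3 (Add k3))" | "op = Topple k3 ?S3 l"
      | "op \<in> set (replicate a2 (Add k2))" | "op = Topple k2 ?S2 l" | "op \<in> set (replicate a1 (Add k1))"
      | "op = Topple k1 ?S1 l" | "op \<in> set R" | "op \<in> set adds" unfolding ops_eq by auto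
    then show "deterministic_op n l op"
    proof cases
      case 1 then show ?thesis using drs_topples[OF dp sp, of op l n "cmax n l"] h unfolding N0_def
        by (auto simp: deterministic_op_def)
    next
      case 8 then show ?thesis using Rt h kr by auto
    next
      case 9 then show ?thesis using At h by auto
    qed (use h S1 S2 S3 in \<open>auto simp: deterministic_op_def\<close>)
  qed
  define A2 where "A2 = N0 @ replicate a3 (Add k3) @ Topple k3 ?S3 l # replicate a2 (Add k2)"
  define B2 where "B2 = replicate a1 (Add k1) @ Topple k1 ?S1 l # R @ adds"
  define A1 where "A1 = A2 @ Topple k2 ?S2 l # replicate a1 (Add k1)"
  define B1 where "B1 = R @ adds"
  have e2: "ops = A2 @ Topple k2 ?S2 l # B2" unfolding ops_eq A2_def B2_def by simp
  have e1: "ops = A1 @ Topple k1 ?S1 l # B1" unfolding ops_eq A1_def A2_def B1_def by simp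
  have nB1: "\<forall>op\<in>set B1. \<forall>S s. op \<noteq> Topple k1 S s" unfolding B1_def using Rt At kr by fastforce
  have nB2: "\<forall>op\<in>set B2. \<forall>S s. op \<noteq> Topple k2 S s" unfolding B2_def using Rt At kr A(7) by fastforce
  have nB3: "\<forall>op\<in>set B2. \<forall>S s. op \<noteq> Topple k3 S s" unfolding B2_def using Rt At kr A(9) by fastforce
  have lt: "length A2 < length A1" unfolding A1_def by simp
  have k3c: "\<forall>j. topples_at ops j k3 \<longrightarrow> j < length A2"
  proof (intro allI impI)
    fix j assume t: "topples_at ops j k3"
    show "j < length A2"
    proof (rule ccontr)
      assume "\<not> j < length A2"
      then consider "j = length A2" | "length A2 < j" by linarith
      then show False
      proof cases
        case 1
        then show False using t e2 A(8) unfolding topples_at_def by auto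
      next
        case 2
        then show False using no_later[OF e2 nB3 2] t by blast
      qed
    qed
  qed
  show ?thesis
    apply (rule exI[of _ ops])
    apply (intro conjI run det)
    apply (rule exI[of _ "length A1"], rule exI[of _ "length A2"])
    using lt at_pos[OF e1] at_pos[OF e2] no_later[OF e1 nB1] no_later[OF e2 nB2] k3c by blast
qed

end
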